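(* Let $p$ be a prime. Suppose that every finite metabelian semi-$p$-abelian $p$-group is semi-$p^{2}$-abelian. Then every finite metabelian semi-$p$-abelian $p$-group is strongly semi-$p$-abelian.
   Context: Let $G$ be a finite $p$-group. For a positive integer $i$, $G$ is called semi-$p^{i}$-abelian if for all $a,b\in G$: $(ab)^{p^{i}}=1$ if and only if $a^{p^{i}}b^{p^{i}}=1$. $G$ is strongly semi-$p$-abelian if it is semi-$p^{i}$-abelian for every positive integer $i$. Metabelian means $G''=1$. *)

theory Defs
  imports "HOL-Algebra.Algebra"
begin

definition finite_p_group :: "('a, 'b) monoid_scheme \<Rightarrow> nat \<Rightarrow> bool" where
  "finite_p_group G p \<longleftrightarrow> group G \<and> finite (carrier G) \<and> (\<exists>n::nat. order G = p ^ n)"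

definition metabelian :: "('a, 'b) monoid_scheme \<Rightarrow> bool" where
  "metabelian G \<longleftrightarrow> derived G (derived G (carrier G)) = {\<one>\<^bsub>G\<^esub>}"

definition semi_pi_abelian :: "('a, 'b) monoid_scheme \<Rightarrow> nat \<Rightarrow> nat \<Rightarrow> bool" where
  "semi_pi_abelian G p i \<longleftrightarrow>
     (\<forall>a \<in> carrier G. \<forall>b \<in> carrier G.
        (a \<otimes>\<^bsub>G\<^esub> b) [^]\<^bsub>G\<^esub> (p ^ i) = \<one>\<^bsub>G\<^esub> \<longleftrightarrow>
        a [^]\<^bsub>G\<^esub> (p ^ i) \<otimes>\<^bsub>G\<^esub> b [^]\<^bsub>G\<^esub> (p ^ i) = \<one>\<^bsub>G\<^esub>)"

definition strongly_semi_p_abelian :: "('a, 'b) monoid_scheme \<Rightarrow> nat \<Rightarrow> bool" where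
  "strongly_semi_p_abelian G p \<longleftrightarrow> (\<forall>i::nat. i \<ge> 1 \<longrightarrow> semi_pi_abelian G p i)"

end

theory Submission
  imports Defs
begin

lemma hom_surj_metabelian:
  assumes G: "group G" and H: "group H" and f: "f \<in> hom G H"
    and surj: "f ` carrier G = carrier H" and m: "metabelian G"
  shows "metabelian H"
proof -
  interpret gh: group_hom G H f using G H f by (simp add: group_hom_def group_hom_axioms_def)
  have "(derived H ^^ 2) (f ` carrier G) = f ` ((derived G ^^ 2) (carrier G))"
    by (rule gh.exp_of_derived_img) simp
  then have "derived H (derived H (carrier H)) = f ` (derived G (derived G (carrier G)))"
    using surj by (simp add: numeral_2_eq_2)
  also have "\<dots> = {\<one>\<^bsub>H\<^esub>}" using m by (simp add: metabelian_def)
  finally show ?thesis by (simp add: metabelian_def)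
qed

lemma iso_semi:
  assumes G: "group G" and H: "group H" and f: "f \<in> iso G H"
    and s: "semi_pi_abelian G p i"
  shows "semi_pi_abelian H p i"
  unfolding semi_pi_abelian_def
proof (intro ballI)
  interpret gh: group_hom G H f using G H f
    by (simp add: group_hom_def group_hom_axioms_def iso_imp_homomorphism)
  have inj: "inj_on f (carrier G)" and surj: "f ` carrier G = carrier H"
    using f by (auto simp: iso_iff)
  have one: "x \<in> carrier G \<Longrightarrow> f x = \<one>\<^bsub>H\<^esub> \<longleftrightarrow> x = \<one>\<^bsub>G\<^esub>" for x
    using inj by (metis gh.hom_one G group.is_monoid monoid.one_closed inj_on_eq_iff)
  fix a' b' assume "a' \<in> carrier H" "b' \<in> carrier H"
  then obtain a b where a: "a \<in> carrier G" "a' = f a" and b: "b \<in> carrier G" "b' = f b"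
    using surj by blast
  have e1: "(a' \<otimes>\<^bsub>H\<^esub> b') [^]\<^bsub>H\<^esub> (p ^ i) = f ((a \<otimes>\<^bsub>G\<^esub> b) [^]\<^bsub>G\<^esub> (p ^ i))"
    using a b by (simp add: gh.hom_nat_pow)
  have e2: "a' [^]\<^bsub>H\<^esub> (p ^ i) \<otimes>\<^bsub>H\<^esub> b' [^]\<^bsub>H\<^esub> (p ^ i) = f (a [^]\<^bsub>G\<^esub> (p ^ i) \<otimes>\<^bsub>G\<^esub> b [^]\<^bsub>G\<^esub> (p ^ i))"
    using a b by (simp add: gh.hom_nat_pow)
  show "((a' \<otimes>\<^bsub>H\<^esub> b') [^]\<^bsub>H\<^esub> (p ^ i) = \<one>\<^bsub>H\<^esub>) =
        (a' [^]\<^bsub>H\<^esub> (p ^ i) \<otimes>\<^bsub>H\<^esub> b' [^]\<^bsub>H\<^esub> (p ^ i) = \<one>\<^bsub>H\<^esub>)"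
  proof -
    have c1: "(a \<otimes>\<^bsub>G\<^esub> b) [^]\<^bsub>G\<^esub> (p ^ i) \<in> carrier G"
      using a b by (simp add: G group.is_monoid monoid.m_closed monoid.nat_pow_closed)
    have c2: "a [^]\<^bsub>G\<^esub> (p ^ i) \<otimes>\<^bsub>G\<^esub> b [^]\<^bsub>G\<^esub> (p ^ i) \<in> carrier G"
      using a b by (simp add: G group.is_monoid monoid.m_closed monoid.nat_pow_closed)
    show ?thesis unfolding e1 e2 one[OF c1] one[OF c2]
      using s a b by (simp add: semi_pi_abelian_def)
  qed
qed


lemma kernel_transfer1:
  assumes G: "group G" and K: "group K" and f: "f \<in> hom G K"
    and surj: "f ` carrier G = carrier K"
    and ker: "\<And>x. x \<in> carrier G \<Longrightarrow> f x = \<one>\<^bsub>K\<^esub> \<longleftrightarrow> x [^]\<^bsub>G\<^esub> p = \<one>\<^bsub>G\<^esub>"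
    and s1: "semi_pi_abelian G p 1" and s2: "semi_pi_abelian G p 2"
  shows "semi_pi_abelian K p 1"
  unfolding semi_pi_abelian_def
proof (intro ballI)
  interpret G: group G by fact
  interpret gh: group_hom G K f using G K f by (simp add: group_hom_def group_hom_axioms_def)
  fix a' b' assume "a' \<in> carrier K" "b' \<in> carrier K"
  then obtain a b where a: "a \<in> carrier G" "a' = f a" and b: "b \<in> carrier G" "b' = f b"
    using surj by blast
  have "(a' \<otimes>\<^bsub>K\<^esub> b') [^]\<^bsub>K\<^esub> (p ^ 1) = \<one>\<^bsub>K\<^esub> \<longleftrightarrow> f ((a \<otimes>\<^bsub>G\<^esub> b) [^]\<^bsub>G\<^esub> p) = \<one>\<^bsub>K\<^esub>"
    using a b by (simp add: gh.hom_nat_pow)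
  also have "\<dots> \<longleftrightarrow> (a \<otimes>\<^bsub>G\<^esub> b) [^]\<^bsub>G\<^esub> (p ^ 2) = \<one>\<^bsub>G\<^esub>"
    using a b ker by (simp add: G.nat_pow_pow power2_eq_square)
  also have "\<dots> \<longleftrightarrow> a [^]\<^bsub>G\<^esub> (p ^ 2) \<otimes>\<^bsub>G\<^esub> b [^]\<^bsub>G\<^esub> (p ^ 2) = \<one>\<^bsub>G\<^esub>"
    using s2 a b unfolding semi_pi_abelian_def by blast
  also have "\<dots> \<longleftrightarrow> (a [^]\<^bsub>G\<^esub> p) [^]\<^bsub>G\<^esub> (p ^ 1) \<otimes>\<^bsub>G\<^esub> (b [^]\<^bsub>G\<^esub> p) [^]\<^bsub>G\<^esub> (p ^ 1) = \<one>\<^bsub>G\<^esub>"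
    using a b by (simp add: G.nat_pow_pow power2_eq_square)
  also have "\<dots> \<longleftrightarrow> ((a [^]\<^bsub>G\<^esub> p) \<otimes>\<^bsub>G\<^esub> (b [^]\<^bsub>G\<^esub> p)) [^]\<^bsub>G\<^esub> (p ^ 1) = \<one>\<^bsub>G\<^esub>"
    using s1 a b unfolding semi_pi_abelian_def by simp
  also have "\<dots> \<longleftrightarrow> f ((a [^]\<^bsub>G\<^esub> p) \<otimes>\<^bsub>G\<^esub> (b [^]\<^bsub>G\<^esub> p)) = \<one>\<^bsub>K\<^esub>"
    using a b ker[of "(a [^]\<^bsub>G\<^esub> p) \<otimes>\<^bsub>G\<^esub> (b [^]\<^bsub>G\<^esub> p)"] by (simp del: gh.hom_mult)
  also have "\<dots> \<longleftrightarrow> a' [^]\<^bsub>K\<^esub> (p ^ 1) \<otimes>\<^bsub>K\<^esub> b' [^]\<^bsub>K\<^esub> (p ^ 1) = \<one>\<^bsub>K\<^esub>"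
    using a b by (simp add: gh.hom_nat_pow)
  finally show "(a' \<otimes>\<^bsub>K\<^esub> b') [^]\<^bsub>K\<^esub> (p ^ 1) = \<one>\<^bsub>K\<^esub> \<longleftrightarrow>
     a' [^]\<^bsub>K\<^esub> (p ^ 1) \<otimes>\<^bsub>K\<^esub> b' [^]\<^bsub>K\<^esub> (p ^ 1) = \<one>\<^bsub>K\<^esub>" .
qed

lemma kernel_transfer2:
  assumes G: "group G" and K: "group K" and f: "f \<in> hom G K"
    and surj: "f ` carrier G = carrier K"
    and ker: "\<And>x. x \<in> carrier G \<Longrightarrow> f x = \<one>\<^bsub>K\<^esub> \<longleftrightarrow> x [^]\<^bsub>G\<^esub> p = \<one>\<^bsub>G\<^esub>"
    and s1: "semi_pi_abelian G p 1" and sk: "semi_pi_abelian K p k"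
  shows "semi_pi_abelian G p (Suc k)"
  unfolding semi_pi_abelian_def
proof (intro ballI)
  interpret G: group G by fact
  interpret gh: group_hom G K f using G K f by (simp add: group_hom_def group_hom_axioms_def)
  fix a b assume a: "a \<in> carrier G" and b: "b \<in> carrier G"
  have "(a \<otimes>\<^bsub>G\<^esub> b) [^]\<^bsub>G\<^esub> (p ^ Suc k) = \<one>\<^bsub>G\<^esub> \<longleftrightarrow>
        ((a \<otimes>\<^bsub>G\<^esub> b) [^]\<^bsub>G\<^esub> (p ^ k)) [^]\<^bsub>G\<^esub> p = \<one>\<^bsub>G\<^esub>"
    using a b by (simp add: G.nat_pow_pow mult.commute)
  also have "\<dots> \<longleftrightarrow> f ((a \<otimes>\<^bsub>G\<^esub> b) [^]\<^bsub>G\<^esub> (p ^ k)) = \<one>\<^bsub>K\<^esub>"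
    using a b ker by simp
  also have "\<dots> \<longleftrightarrow> (f a \<otimes>\<^bsub>K\<^esub> f b) [^]\<^bsub>K\<^esub> (p ^ k) = \<one>\<^bsub>K\<^esub>"
    using a b by (simp add: gh.hom_nat_pow)
  also have "\<dots> \<longleftrightarrow> f a [^]\<^bsub>K\<^esub> (p ^ k) \<otimes>\<^bsub>K\<^esub> f b [^]\<^bsub>K\<^esub> (p ^ k) = \<one>\<^bsub>K\<^esub>"
    using sk a b unfolding semi_pi_abelian_def by simp
  also have "\<dots> \<longleftrightarrow> f (a [^]\<^bsub>G\<^esub> (p ^ k) \<otimes>\<^bsub>G\<^esub> b [^]\<^bsub>G\<^esub> (p ^ k)) = \<one>\<^bsub>K\<^esub>"
    using a b by (simp add: gh.hom_nat_pow)
  also have "\<dots> \<longleftrightarrow> (a [^]\<^bsub>G\<^esub> (p ^ k) \<otimes>\<^bsub>G\<^esub> b [^]\<^bsub>G\<^esub> (p ^ k)) [^]\<^bsub>G\<^esub> (p ^ 1) = \<one>\<^bsub>G\<^esub>"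
    using a b ker[of "a [^]\<^bsub>G\<^esub> (p ^ k) \<otimes>\<^bsub>G\<^esub> b [^]\<^bsub>G\<^esub> (p ^ k)"] by (simp del: gh.hom_mult)
  also have "\<dots> \<longleftrightarrow> (a [^]\<^bsub>G\<^esub> (p ^ k)) [^]\<^bsub>G\<^esub> (p ^ 1) \<otimes>\<^bsub>G\<^esub> (b [^]\<^bsub>G\<^esub> (p ^ k)) [^]\<^bsub>G\<^esub> (p ^ 1) = \<one>\<^bsub>G\<^esub>"
    using s1 a b unfolding semi_pi_abelian_def by simp
  also have "\<dots> \<longleftrightarrow> a [^]\<^bsub>G\<^esub> (p ^ Suc k) \<otimes>\<^bsub>G\<^esub> b [^]\<^bsub>G\<^esub> (p ^ Suc k) = \<one>\<^bsub>G\<^esub>"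
    using a b by (simp add: G.nat_pow_pow mult.commute)
  finally show "(a \<otimes>\<^bsub>G\<^esub> b) [^]\<^bsub>G\<^esub> (p ^ Suc k) = \<one>\<^bsub>G\<^esub> \<longleftrightarrow>
     a [^]\<^bsub>G\<^esub> (p ^ Suc k) \<otimes>\<^bsub>G\<^esub> b [^]\<^bsub>G\<^esub> (p ^ Suc k) = \<one>\<^bsub>G\<^esub>" .
qed


lemma (in group) conj_pow:
  assumes x: "x \<in> carrier G" and h: "h \<in> carrier G"
  shows "(x \<otimes> h \<otimes> inv x) [^] (n::nat) = x \<otimes> h [^] n \<otimes> inv x"
proof (induction n)
  case 0 then show ?case using assms by simp
next
  case (Suc n)
  have e: "inv x \<otimes> (x \<otimes> y) = y" if "y \<in> carrier G" for y
    using x that by (simp add: m_assoc[symmetric])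
  have "(x \<otimes> h \<otimes> inv x) [^] Suc n = (x \<otimes> h [^] n \<otimes> inv x) \<otimes> (x \<otimes> h \<otimes> inv x)"
    using Suc by simp
  also have "\<dots> = x \<otimes> (h [^] n \<otimes> (inv x \<otimes> (x \<otimes> (h \<otimes> inv x))))"
    using assms by (simp add: m_assoc)
  also have "\<dots> = x \<otimes> (h [^] n \<otimes> (h \<otimes> inv x))"
    using assms by (simp add: e)
  also have "\<dots> = x \<otimes> h [^] Suc n \<otimes> inv x"
    using assms by (simp add: m_assoc)
  finally show ?case .
qed

lemma (in group) omega_normal:
  assumes s1: "semi_pi_abelian G p 1"
  shows "{x \<in> carrier G. x [^] p = \<one>} \<lhd> G"
  unfolding normal_inv_iff
proof (intro conjI ballI)
  show "subgroup {x \<in> carrier G. x [^] p = \<one>} G"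
  proof (rule subgroupI)
    show "{x \<in> carrier G. x [^] p = \<one>} \<noteq> {}" by (auto intro!: exI[of _ \<one>])
    fix a assume "a \<in> {x \<in> carrier G. x [^] p = \<one>}"
    then show "inv a \<in> {x \<in> carrier G. x [^] p = \<one>}" by (simp add: nat_pow_inv)
  next
    fix a b assume a: "a \<in> {x \<in> carrier G. x [^] p = \<one>}" and b: "b \<in> {x \<in> carrier G. x [^] p = \<one>}"
    then show "a \<otimes> b \<in> {x \<in> carrier G. x [^] p = \<one>}"
      using s1 unfolding semi_pi_abelian_def by auto
  qed auto
next
  fix x h assume x: "x \<in> carrier G" and h: "h \<in> {x \<in> carrier G. x [^] p = \<one>}"
  then show "x \<otimes> h \<otimes> inv x \<in> {x \<in> carrier G. x [^] p = \<one>}"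
    by (simp add: conj_pow)
qed


lemma quotient_exists:
  fixes G :: "nat monoid"
  assumes p: "Factorial_Ring.prime p" and fp: "finite_p_group G p" and m: "metabelian G"
    and s1: "semi_pi_abelian G p 1" and s2: "semi_pi_abelian G p 2"
  shows "\<exists>K :: nat monoid. finite_p_group K p \<and> metabelian K \<and> semi_pi_abelian K p 1 \<and>
           (\<forall>k. semi_pi_abelian K p k \<longrightarrow> semi_pi_abelian G p (Suc k))"
proof -
  interpret G: group G using fp by (simp add: finite_p_group_def)
  define N where "N = {x \<in> carrier G. x [^]\<^bsub>G\<^esub> p = \<one>\<^bsub>G\<^esub>}"
  have nN: "N \<lhd> G" unfolding N_def by (rule G.omega_normal[OF s1])
  interpret N: normal N G by (rule nN)
  define rep where "rep = (\<lambda>U::nat set. SOME g. g \<in> U)"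
  define K where "K = flatten (G Mod N) rep"
  have K: "group K" unfolding K_def rep_def by (rule N.flatten_set_group_mod)
  have iso: "rep \<in> iso (G Mod N) K" unfolding K_def rep_def by (rule N.flatten_set_group_mod_iso)
  have injr: "inj_on rep (carrier (G Mod N))" unfolding rep_def by (rule N.flatten_set_group_mod_inj)
  define f where "f = rep \<circ> (\<lambda>a. N #>\<^bsub>G\<^esub> a)"
  have fhom: "f \<in> hom G K" unfolding f_def
    by (rule hom_compose[OF N.r_coset_hom_Mod iso_imp_homomorphism[OF iso]])
  have cK: "carrier K = rep ` carrier (G Mod N)" by (simp add: K_def flatten_def)
  have cM: "carrier (G Mod N) = (\<lambda>a. N #>\<^bsub>G\<^esub> a) ` carrier G" by (rule carrier_FactGroup)
  have surj: "f ` carrier G = carrier K" unfolding cK cM f_def by (simp add: image_comp)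
  have oneK: "\<one>\<^bsub>K\<^esub> = rep N" by (simp add: K_def flatten_def)
  have ker: "f x = \<one>\<^bsub>K\<^esub> \<longleftrightarrow> x [^]\<^bsub>G\<^esub> p = \<one>\<^bsub>G\<^esub>" if x: "x \<in> carrier G" for x
  proof -
    have c1: "N #>\<^bsub>G\<^esub> x \<in> carrier (G Mod N)" using x cM by blast
    have e1: "N #>\<^bsub>G\<^esub> \<one>\<^bsub>G\<^esub> = N"
      by (rule N.rcos_const[OF G.is_group N.one_closed])
    have c2: "N \<in> carrier (G Mod N)"
      unfolding cM using image_eqI[where f="\<lambda>a. N #>\<^bsub>G\<^esub> a", OF e1[symmetric] G.one_closed] .
    have "f x = \<one>\<^bsub>K\<^esub> \<longleftrightarrow> N #>\<^bsub>G\<^esub> x = N"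
      unfolding oneK f_def using inj_on_eq_iff[OF injr c1 c2] by simp
    also have "\<dots> \<longleftrightarrow> x \<in> N"
    proof
      assume "N #>\<^bsub>G\<^esub> x = N"
      then show "x \<in> N" using G.rcos_self[OF x N.is_subgroup] by simp
    next
      assume "x \<in> N" then show "N #>\<^bsub>G\<^esub> x = N" by (rule N.rcos_const[OF G.is_group])
    qed
    also have "\<dots> \<longleftrightarrow> x [^]\<^bsub>G\<^esub> p = \<one>\<^bsub>G\<^esub>" using x N_def by blast
    finally show ?thesis .
  qed
  have K1: "semi_pi_abelian K p 1"
    by (rule kernel_transfer1[OF G.is_group K fhom surj ker s1 s2])
  have Km: "metabelian K"
    by (rule hom_surj_metabelian[OF G.is_group K fhom surj m])
  have Kfp: "finite_p_group K p"
  proof -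
    obtain n where on: "order G = p ^ n" and fin: "finite (carrier G)"
      using fp by (auto simp: finite_p_group_def)
    have "card (rcosets\<^bsub>G\<^esub> N) * card N = p ^ n"
      using G.lagrange[OF N.is_subgroup] on by simp
    then have "card (rcosets\<^bsub>G\<^esub> N) dvd p ^ n" by (metis dvd_triv_left)
    then obtain i where "card (rcosets\<^bsub>G\<^esub> N) = p ^ i" using divides_primepow_nat[OF p] by blast
    moreover have "order K = card (rcosets\<^bsub>G\<^esub> N)"
      unfolding order_def cK using card_image[OF injr] by (simp add: FactGroup_def)
    moreover have "finite (carrier K)" using fin surj finite_imageI[of "carrier G" f] by simp
    ultimately show ?thesis using K by (auto simp: finite_p_group_def)
  qed
  show ?thesis
    using Kfp Km K1 kernel_transfer2[OF G.is_group K fhom surj ker s1] by blast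
qed


definition nat_copy :: "('a, 'b) monoid_scheme \<Rightarrow> ('a \<Rightarrow> nat) \<Rightarrow> nat monoid" where
  "nat_copy G r = \<lparr>carrier = r ` (carrier G),
      monoid.mult = (\<lambda>x y. r ((the_inv_into (carrier G) r x) \<otimes>\<^bsub>G\<^esub> (the_inv_into (carrier G) r y))),
      one = r \<one>\<^bsub>G\<^esub>\<rparr>"

lemma nat_copy_hom:
  assumes "group G" "inj_on r (carrier G)"
  shows "r \<in> hom G (nat_copy G r)"
  using assms by (force simp add: hom_def nat_copy_def the_inv_into_f_f)

lemma nat_copy_group:
  assumes "group G" "inj_on r (carrier G)"
  shows "group (nat_copy G r)"
proof (rule groupI)
  fix x y
  assume "x \<in> carrier (nat_copy G r)" and "y \<in> carrier (nat_copy G r)"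
  then show "x \<otimes>\<^bsub>nat_copy G r\<^esub> y \<in> carrier (nat_copy G r)"
    using assms group.surj_const_mult the_inv_into_f_f by (fastforce simp: nat_copy_def)
next
  show "\<one>\<^bsub>nat_copy G r\<^esub> \<in> carrier (nat_copy G r)"
    unfolding nat_copy_def by (simp add: assms group.is_monoid)
next
  fix x y z
  assume "x \<in> carrier (nat_copy G r)" "y \<in> carrier (nat_copy G r)" "z \<in> carrier (nat_copy G r)"
  then show "x \<otimes>\<^bsub>nat_copy G r\<^esub> y \<otimes>\<^bsub>nat_copy G r\<^esub> z = x \<otimes>\<^bsub>nat_copy G r\<^esub> (y \<otimes>\<^bsub>nat_copy G r\<^esub> z)"
    by (auto simp: assms nat_copy_def group.is_monoid monoid.m_assoc monoid.m_closed the_inv_into_f_f)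
next
  fix x
  assume x: "x \<in> carrier (nat_copy G r)"
  then show "\<one>\<^bsub>nat_copy G r\<^esub> \<otimes>\<^bsub>nat_copy G r\<^esub> x = x"
    by (auto simp: assms group.is_monoid the_inv_into_f_f nat_copy_def)
  then have "\<exists>y\<in>carrier G. r (y \<otimes>\<^bsub>G\<^esub> z) = r \<one>\<^bsub>G\<^esub>" if "z \<in> carrier G" for z
    by (metis \<open>group G\<close> group.l_inv_ex that)
  with assms x show "\<exists>y\<in>carrier (nat_copy G r). y \<otimes>\<^bsub>nat_copy G r\<^esub> x = \<one>\<^bsub>nat_copy G r\<^esub>"
    by (auto simp: nat_copy_def the_inv_into_f_f)
qed

lemma main_induct:
  fixes p :: nat and H :: "nat monoid"
  assumes p: "Factorial_Ring.prime p"
    and hyp: "\<And>H :: nat monoid. finite_p_group H p \<Longrightarrow> metabelian H \<Longrightarrow>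
                 semi_pi_abelian H p 1 \<Longrightarrow> semi_pi_abelian H p 2"
  shows "finite_p_group H p \<Longrightarrow> metabelian H \<Longrightarrow> semi_pi_abelian H p 1 \<Longrightarrow>
         semi_pi_abelian H p (Suc k)"
proof (induction k arbitrary: H)
  case 0 then show ?case by simp
next
  case (Suc k)
  have s2: "semi_pi_abelian H p 2" using hyp Suc.prems by blast
  obtain K :: "nat monoid" where K: "finite_p_group K p" "metabelian K" "semi_pi_abelian K p 1"
    and tr: "\<forall>k. semi_pi_abelian K p k \<longrightarrow> semi_pi_abelian H p (Suc k)"
    using quotient_exists[OF p Suc.prems s2] by blast
  show ?case using tr Suc.IH[OF K] by blast
qed

theorem lemma2p3:
  fixes p :: nat and G :: "('a, 'b) monoid_scheme"
  assumes "Factorial_Ring.prime p"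
    and hyp: "\<And>H :: nat monoid. finite_p_group H p \<Longrightarrow> metabelian H \<Longrightarrow>
                 semi_pi_abelian H p 1 \<Longrightarrow> semi_pi_abelian H p 2"
    and "finite_p_group G p" and "metabelian G" and "semi_pi_abelian G p 1"
  shows "strongly_semi_p_abelian G p"
proof -
  have G: "group G" and fin: "finite (carrier G)" and on: "\<exists>n. order G = p ^ n"
    using assms(3) by (auto simp: finite_p_group_def)
  interpret G: group G by (rule G)
  obtain r :: "'a \<Rightarrow> nat" and n where "r ` carrier G = {i. i < n}" and inj: "inj_on r (carrier G)"
    using finite_imp_inj_to_nat_seg[OF fin] by blast
  define H where "H = nat_copy G r"
  have Hg: "group H" unfolding H_def by (rule nat_copy_group[OF G inj])
  have cH: "carrier H = r ` carrier G" by (simp add: H_def nat_copy_def)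
  have hom: "r \<in> hom G H" unfolding H_def by (rule nat_copy_hom[OF G inj])
  have iso: "r \<in> iso G H" using hom inj cH by (simp add: iso_def bij_betw_def)
  have iso': "inv_into (carrier G) r \<in> iso H G" by (rule G.iso_set_sym[OF iso])
  have Hfp: "finite_p_group H p"
    using Hg fin on card_image[OF inj] cH by (auto simp: finite_p_group_def order_def)
  have Hm: "metabelian H" by (rule hom_surj_metabelian[OF G Hg hom cH[symmetric] assms(4)])
  have H1: "semi_pi_abelian H p 1" by (rule iso_semi[OF G Hg iso assms(5)])
  show ?thesis unfolding strongly_semi_p_abelian_def
  proof (intro allI impI)
    fix i :: nat assume "1 \<le> i"
    then obtain k where i: "i = Suc k" by (cases i) auto
    have "semi_pi_abelian H p (Suc k)" by (rule main_induct[OF assms(1) hyp Hfp Hm H1])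
    then show "semi_pi_abelian G p i" using iso_semi[OF Hg G iso'] i by blast
  qed
qed

end
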